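(* Let $G=(X,b,m,c)$ be a weighted graph with $c=0$, let $p\in(1,\infty)$, let $W\subseteq X$ be finite and $\psi,\theta\colon X\to\mathbb{R}$. Let $u$ be a solution to the obstacle problem in $K_{\psi,\theta}(W)$. If $v\in F^p(\overline W)$ (respectively $v\in D^p(\overline W)$) satisfies $\Delta_pv\ge0$ on $W$ and $u\wedge v\in K_{\psi,\theta}(W)$, then $v\ge u$ on $W$.
   Context: Weighted graph $G=(X,b,m,c)$: $X$ countably infinite; $b$ symmetric, nonnegative, zero on the diagonal, $\sum_yb(x,y)<\infty$; $m>0$; $c\ge0$; $x\sim y$ iff $b(x,y)>0$; $X$ connected. $\partial_eW=\{y\in X\setminus W:y\sim z\text{ for some }z\in W\}$, $\overline W=W\cup\partial_eW$. $a^{\langle p-1\rangle}=|a|^{p-2}a$. $F^p(U)=\{f\colon X\to\mathbb{R}:\sum_yb(x,y)|f(x)-f(y)|^{p-1}<\infty\ \forall x\in U\}$; $\Delta_pf(x)=\frac1{m(x)}\sum_{y\in X}b(x,y)(f(x)-f(y))^{\langle p-1\rangle}$. $\mathcal{E}_{p,U}(u,w)=\frac12\sum_{x,y\in U}b(x,y)(u(x)-u(y))^{\langle p-1\rangle}(w(x)-w(y))$. $D^p(\overline W)=\{v:\sum_{x,y\in\overline W}b(x,y)|v(x)-v(y)|^p<\infty\}$. $K_{\psi,\theta}(W)=\{v\in D^p(\overline W):v\ge\psi\text{ on }W,\ v=\theta\text{ on }\partial_eW\}$. A solution to the obstacle problem in $K_{\psi,\theta}(W)$ is $u\in K_{\psi,\theta}(W)$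 with $\mathcal{E}_{p,\overline W}(u,v-u)\ge0$ for all $v\in K_{\psi,\theta}(W)$. $u\wedge v$ is the pointwise minimum. *)

theory Defs
  imports "HOL-Analysis.Analysis"
begin

text \<open>Weighted graphs on a vertex type 'x; X = UNIV :: 'x set.\<close>

definition weighted_graph :: "('x \<Rightarrow> 'x \<Rightarrow> real) \<Rightarrow> ('x \<Rightarrow> real) \<Rightarrow> ('x \<Rightarrow> real) \<Rightarrow> bool" where
  "weighted_graph b m c \<longleftrightarrow>
     countable (UNIV :: 'x set) \<and> infinite (UNIV :: 'x set) \<and>
     (\<forall>x y. b x y = b y x) \<and> (\<forall>x y. b x y \<ge> 0) \<and> (\<forall>x. b x x = 0) \<and>
     (\<forall>x. (b x) summable_on UNIV) \<and>
     (\<forall>x. m x > 0) \<and> (\<forall>x. c x \<ge> 0) \<and>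
     (\<forall>x y. (\<lambda>s t. b s t > 0)\<^sup>*\<^sup>* x y)"

definition sgnpow :: "real \<Rightarrow> real \<Rightarrow> real" where
  "sgnpow q a = \<bar>a\<bar> powr (q - 2) * a"

definition ext_boundary :: "('x \<Rightarrow> 'x \<Rightarrow> real) \<Rightarrow> 'x set \<Rightarrow> 'x set" where
  "ext_boundary b W = {y. y \<notin> W \<and> (\<exists>z\<in>W. b y z > 0)}"

definition gclosure :: "('x \<Rightarrow> 'x \<Rightarrow> real) \<Rightarrow> 'x set \<Rightarrow> 'x set" where
  "gclosure b W = W \<union> ext_boundary b W"

definition Fp :: "('x \<Rightarrow> 'x \<Rightarrow> real) \<Rightarrow> real \<Rightarrow> 'x set \<Rightarrow> ('x \<Rightarrow> real) \<Rightarrow> bool" where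
  "Fp b p U f \<longleftrightarrow> (\<forall>x\<in>U. (\<lambda>y. b x y * \<bar>f x - f y\<bar> powr (p - 1)) summable_on UNIV)"

definition p_laplacian :: "('x \<Rightarrow> 'x \<Rightarrow> real) \<Rightarrow> ('x \<Rightarrow> real) \<Rightarrow> real \<Rightarrow> ('x \<Rightarrow> real) \<Rightarrow> 'x \<Rightarrow> real" where
  "p_laplacian b m p f x = (1 / m x) * (\<Sum>\<^sub>\<infinity>y. b x y * sgnpow p (f x - f y))"

definition energy :: "('x \<Rightarrow> 'x \<Rightarrow> real) \<Rightarrow> real \<Rightarrow> 'x set \<Rightarrow> ('x \<Rightarrow> real) \<Rightarrow> ('x \<Rightarrow> real) \<Rightarrow> real" where
  "energy b p U u w = 1 / 2 * (\<Sum>\<^sub>\<infinity>(x, y)\<in>U \<times> U. b x y * sgnpow p (u x - u y) * (w x - w y))"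

definition Dp :: "('x \<Rightarrow> 'x \<Rightarrow> real) \<Rightarrow> real \<Rightarrow> 'x set \<Rightarrow> ('x \<Rightarrow> real) \<Rightarrow> bool" where
  "Dp b p A v \<longleftrightarrow> (\<lambda>(x, y). b x y * \<bar>v x - v y\<bar> powr p) summable_on (A \<times> A)"

definition Kset :: "('x \<Rightarrow> 'x \<Rightarrow> real) \<Rightarrow> real \<Rightarrow> ('x \<Rightarrow> real) \<Rightarrow> ('x \<Rightarrow> real) \<Rightarrow> 'x set \<Rightarrow> ('x \<Rightarrow> real) set" where
  "Kset b p \<psi> \<theta> W = {v. Dp b p (gclosure b W) v \<and> (\<forall>x\<in>W. v x \<ge> \<psi> x) \<and> (\<forall>x\<in>ext_boundary b W. v x = \<theta> x)}"

definition obstacle_solution :: "('x \<Rightarrow> 'x \<Rightarrow> real) \<Rightarrow> real \<Rightarrow> ('x \<Rightarrow> real) \<Rightarrow> ('x \<Rightarrow> real) \<Rightarrow> 'x set \<Rightarrow> ('x \<Rightarrow> real) \<Rightarrow> bool" where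
  "obstacle_solution b p \<psi> \<theta> W u \<longleftrightarrow> u \<in> Kset b p \<psi> \<theta> W \<and>
     (\<forall>v\<in>Kset b p \<psi> \<theta> W. energy b p (gclosure b W) u (\<lambda>x. v x - u x) \<ge> 0)"

end

theory Submission
  imports Defs
begin

lemma sgnpow_alt: "sgnpow p a = (if a \<ge> 0 then a powr (p-1) else - ((-a) powr (p-1)))"
proof (cases "a > 0")
  case True
  then have "a powr (p-2) * a = a powr (p-2) * a powr 1" by simp
  also have "\<dots> = a powr (p - 2 + 1)" by (rule powr_add[symmetric])
  also have "p - 2 + 1 = p - 1" by simp
  finally show ?thesis using True by (simp add: sgnpow_def)
next
  case False
  show ?thesis
  proof (cases "a = 0")
    case True then show ?thesis by (simp add: sgnpow_def)
  next
    case F2: False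
    then have n: "-a > 0" using False by simp
    have "(-a) powr (p-2) * (-a) = (-a) powr (p-2) * (-a) powr 1" using n by simp
    also have "\<dots> = (-a) powr (p - 2 + 1)" by (rule powr_add[symmetric])
    also have "p - 2 + 1 = p - 1" by simp
    finally have "(-a) powr (p-2) * a = - ((-a) powr (p-1))" by (simp add: algebra_simps)
    then show ?thesis using False F2 by (simp add: sgnpow_def)
  qed
qed

lemma sgnpow_neg: "sgnpow p (-a) = - sgnpow p a" by (simp add: sgnpow_def)

lemma abs_sgnpow: "\<bar>sgnpow p a\<bar> = \<bar>a\<bar> powr (p-1)"
  by (cases "a \<ge> 0") (simp_all add: sgnpow_alt)

lemma sgnpow_less: assumes "p > 1" "a < c" shows "sgnpow p a < sgnpow p c"
proof -
  have q: "0 < p - 1" using assms by simp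
  show ?thesis
  proof (cases "a \<ge> 0")
    case True
    then show ?thesis using assms q by (simp add: sgnpow_alt powr_less_mono2)
  next
    case False
    show ?thesis
    proof (cases "c \<ge> 0")
      case True
      have "0 < (-a) powr (p-1)" using False by simp
      moreover have "0 \<le> c powr (p-1)" by simp
      moreover have "sgnpow p a = -((-a) powr (p-1))" using False by (simp add: sgnpow_alt)
      moreover have "sgnpow p c = c powr (p-1)" using True by (simp add: sgnpow_alt)
      ultimately show ?thesis by linarith
    next
      case F2: False
      have "(-c) powr (p-1) < (-a) powr (p-1)" using F2 assms q by (intro powr_less_mono2) auto
      then show ?thesis using False F2 by (simp add: sgnpow_alt)
    qed
  qed
qed

lemma sgnpow_le: assumes "p > 1" "a \<le> c" shows "sgnpow p a \<le> sgnpow p c"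
  using sgnpow_less[OF assms(1)] assms(2) by (cases "a = c") (auto simp: order_le_less)

lemma pow_sum_bound:
  fixes a c p :: real
  assumes "a \<ge> 0" "c \<ge> 0" "p > 0"
  shows "(a + c) powr p \<le> 2 powr p * (a powr p + c powr p)"
proof -
  have "(a + c) powr p \<le> (2 * max a c) powr p" using assms by (intro powr_mono2) auto
  also have "\<dots> = 2 powr p * max a c powr p" using assms by (simp add: powr_mult)
  also have "max a c powr p \<le> a powr p + c powr p" by (cases "a \<le> c") (auto simp: max_def)
  then have "2 powr p * max a c powr p \<le> 2 powr p * (a powr p + c powr p)" by simp
  finally show ?thesis .
qed

lemma pm1_bound: fixes d p :: real assumes "p > 1" "d \<ge> 0" shows "d powr (p-1) \<le> 1 + d powr p"
proof (cases "d \<le> 1")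
  case True
  then have "d powr (p-1) \<le> 1" using assms by (intro powr_le1) auto
  then show ?thesis by (smt (verit) powr_ge_zero)
next
  case False
  then have "d powr (p-1) \<le> d powr p" by (intro powr_mono) auto
  then show ?thesis by simp
qed

lemma dp_bound:
  fixes bb a a' c p :: real
  assumes "bb \<ge> 0" "\<bar>a'\<bar> \<le> \<bar>a\<bar> + c" "c \<ge> 0" "p > 0"
  shows "bb * \<bar>a'\<bar> powr p \<le> 2 powr p * (bb * \<bar>a\<bar> powr p) + 2 powr p * (bb * c powr p)"
proof -
  have "\<bar>a'\<bar> powr p \<le> (\<bar>a\<bar> + c) powr p" using assms by (intro powr_mono2) auto
  also have "\<dots> \<le> 2 powr p * (\<bar>a\<bar> powr p + c powr p)" using assms by (intro pow_sum_bound) auto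
  finally have "bb * \<bar>a'\<bar> powr p \<le> bb * (2 powr p * (\<bar>a\<bar> powr p + c powr p))"
    using assms(1) by (rule mult_left_mono)
  then show ?thesis by (simp add: algebra_simps)
qed

lemma rowcol:
  fixes H :: "'a \<Rightarrow> 'a \<Rightarrow> real"
  assumes "z \<in> A" "\<And>x y. x \<noteq> z \<Longrightarrow> y \<noteq> z \<Longrightarrow> H x y = 0" "H z z = 0"
    "(\<lambda>y. H z y) summable_on A" "(\<lambda>x. H x z) summable_on A"
  shows "(\<lambda>(x,y). H x y) summable_on A \<times> A"
    "infsum (\<lambda>(x,y). H x y) (A \<times> A) = infsum (\<lambda>y. H z y) A + infsum (\<lambda>x. H x z) A"
proof -
  define H1 where "H1 = (\<lambda>(x,y). if x = z then H x y else (0::real))"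
  define H2 where "H2 = (\<lambda>(x,y). if x = z then 0 else H x y)"
  have inj1: "inj_on (Pair z) A" by (auto simp: inj_on_def)
  have inj2: "inj_on (\<lambda>x. (x, z)) (A - {z})" by (auto simp: inj_on_def)
  have e1: "H1 summable_on A \<times> A \<longleftrightarrow> (\<lambda>(x,y). H x y) summable_on (Pair z ` A)"
    by (rule summable_on_cong_neutral) (auto simp: H1_def assms(1))
  have e1': "infsum H1 (A \<times> A) = infsum (\<lambda>(x,y). H x y) (Pair z ` A)"
    by (rule infsum_cong_neutral) (auto simp: H1_def assms(1))
  have e2: "H2 summable_on A \<times> A \<longleftrightarrow> (\<lambda>(x,y). H x y) summable_on ((\<lambda>x. (x, z)) ` (A - {z}))"
    by (rule summable_on_cong_neutral) (auto simp: H2_def assms(1) assms(2) image_iff split: if_splits)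
  have e2': "infsum H2 (A \<times> A) = infsum (\<lambda>(x,y). H x y) ((\<lambda>x. (x, z)) ` (A - {z}))"
    by (rule infsum_cong_neutral) (auto simp: H2_def assms(1) assms(2) image_iff split: if_splits)
  have s1: "H1 summable_on A \<times> A" unfolding e1 summable_on_reindex[OF inj1]
    using assms(4) by (simp add: o_def)
  have s2: "H2 summable_on A \<times> A" unfolding e2 summable_on_reindex[OF inj2]
    using summable_on_subset_banach[OF assms(5), of "A - {z}"] by (simp add: o_def)
  have i1: "infsum H1 (A \<times> A) = infsum (\<lambda>y. H z y) A"
    unfolding e1' infsum_reindex[OF inj1] by (simp add: o_def)
  have i2: "infsum H2 (A \<times> A) = infsum (\<lambda>x. H x z) A"
  proof -
    have "infsum H2 (A \<times> A) = infsum (\<lambda>x. H x z) (A - {z})"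
      unfolding e2' infsum_reindex[OF inj2] by (simp add: o_def)
    also have "\<dots> = infsum (\<lambda>x. H x z) A"
      by (rule infsum_cong_neutral) (auto simp: assms(3))
    finally show ?thesis .
  qed
  have eq: "(\<lambda>(x,y). H x y) = (\<lambda>p. H1 p + H2 p)" by (auto simp: H1_def H2_def)
  show "(\<lambda>(x,y). H x y) summable_on A \<times> A" unfolding eq using s1 s2 by (rule summable_on_add)
  show "infsum (\<lambda>(x,y). H x y) (A \<times> A) = infsum (\<lambda>y. H z y) A + infsum (\<lambda>x. H x z) A"
    unfolding eq using infsum_add[OF s1 s2] i1 i2 by simp
qed

lemma row_summable:
  fixes b :: "'x \<Rightarrow> 'x \<Rightarrow> real" and g :: "'x \<Rightarrow> real"
  assumes "\<And>x y. b x y \<ge> 0" "\<And>y. y \<notin> S \<Longrightarrow> b z y = 0" "(b z) summable_on UNIV"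
    "z \<in> S" "Dp b p S g" "p > 1"
  shows "(\<lambda>y. b z y * \<bar>g z - g y\<bar> powr (p-1)) summable_on UNIV"
proof -
  have "(\<lambda>(x,y). b x y * \<bar>g x - g y\<bar> powr p) summable_on (Pair z ` S)"
    using assms(5) unfolding Dp_def
    by (rule summable_on_subset_banach) (auto simp: assms(4))
  moreover have "inj_on (Pair z) S" by (auto simp: inj_on_def)
  ultimately have "((\<lambda>(x,y). b x y * \<bar>g x - g y\<bar> powr p) \<circ> Pair z) summable_on S"
    using summable_on_reindex by blast
  then have s0: "(\<lambda>y. b z y * \<bar>g z - g y\<bar> powr p) summable_on S"
    by (simp add: o_def)
  have "(\<lambda>y. b z y * \<bar>g z - g y\<bar> powr p) summable_on S \<longleftrightarrow> (\<lambda>y. b z y * \<bar>g z - g y\<bar> powr p) summable_on UNIV"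
    by (rule summable_on_cong_neutral) (auto simp: assms(2))
  with s0 have s: "(\<lambda>y. b z y * \<bar>g z - g y\<bar> powr p) summable_on UNIV" by blast
  have "(\<lambda>y. b z y + b z y * \<bar>g z - g y\<bar> powr p) summable_on UNIV"
    using assms(3) s by (rule summable_on_add)
  then show ?thesis
  proof (rule summable_on_comparison_test)
    fix y
    have "\<bar>g z - g y\<bar> powr (p-1) \<le> 1 + \<bar>g z - g y\<bar> powr p" using assms(6) by (intro pm1_bound) auto
    then have "b z y * \<bar>g z - g y\<bar> powr (p-1) \<le> b z y * (1 + \<bar>g z - g y\<bar> powr p)"
      using assms(1) by (rule mult_left_mono)
    then show "b z y * \<bar>g z - g y\<bar> powr (p-1) \<le> b z y + b z y * \<bar>g z - g y\<bar> powr p"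
      by (simp add: algebra_simps)
    show "0 \<le> b z y * \<bar>g z - g y\<bar> powr (p-1)" using assms(1) by simp
  qed
qed

lemma sum_abs_real: "(\<lambda>y. \<bar>f y\<bar>) summable_on A \<Longrightarrow> (f :: 'a \<Rightarrow> real) summable_on A"
  by (subst summable_on_iff_abs_summable_on_real) simp

theorem lemma3p26:
  fixes b :: "'x \<Rightarrow> 'x \<Rightarrow> real" and m c \<psi> \<theta> u v :: "'x \<Rightarrow> real" and p :: real and W :: "'x set"
  assumes "weighted_graph b m c" and "c = (\<lambda>_. 0)" and "p > 1" and "finite W"
    and "obstacle_solution b p \<psi> \<theta> W u"
    and "Fp b p (gclosure b W) v \<or> Dp b p (gclosure b W) v"
    and "\<forall>x\<in>W. p_laplacian b m p v x \<ge> 0"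
    and "(\<lambda>x. min (u x) (v x)) \<in> Kset b p \<psi> \<theta> W"
  shows "\<forall>x\<in>W. v x \<ge> u x"
proof (rule ccontr)
  assume neg: "\<not> (\<forall>x\<in>W. v x \<ge> u x)"
  note wg = assms(1)[unfolded weighted_graph_def]
  have bsym: "\<And>x y. b x y = b y x" using wg by blast
  have bnn: "\<And>x y. b x y \<ge> 0" using wg by blast
  have bdiag: "\<And>x. b x x = 0" using wg by blast
  have bsum: "\<And>x. (b x) summable_on UNIV" using wg by blast
  have mpos: "\<And>x. m x > 0" using wg by blast
  have conn: "\<And>x y. (\<lambda>s t. b s t > 0)\<^sup>*\<^sup>* x y" using wg by blast
  have infX: "infinite (UNIV :: 'x set)" using wg by blast
  define S where "S = gclosure b W"
  have WS: "W \<subseteq> S" by (auto simp: S_def gclosure_def)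
  have nb: "\<And>x y. x \<in> W \<Longrightarrow> b x y > 0 \<Longrightarrow> y \<in> S"
  proof -
    fix x y assume xW: "x \<in> W" and bxy: "b x y > 0"
    have "b y x > 0" using bxy bsym[of x y] by simp
    then show "y \<in> S" using xW unfolding S_def gclosure_def ext_boundary_def by blast
  qed
  have nb0: "\<And>x y. x \<in> W \<Longrightarrow> y \<notin> S \<Longrightarrow> b x y = 0"
  proof -
    fix x y assume "x \<in> W" "y \<notin> S"
    then show "b x y = 0" using nb[of x y] bnn[of x y] by linarith
  qed
  have uK: "u \<in> Kset b p \<psi> \<theta> W" and uvar: "\<And>w. w \<in> Kset b p \<psi> \<theta> W \<Longrightarrow> energy b p S u (\<lambda>x. w x - u x) \<ge> 0"
    using assms(5) by (auto simp: obstacle_solution_def S_def)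
  have uDp: "Dp b p S u" using uK by (simp add: Kset_def S_def)
  have bd: "\<And>y. y \<in> ext_boundary b W \<Longrightarrow> u y \<le> v y"
  proof -
    fix y assume y: "y \<in> ext_boundary b W"
    then have "min (u y) (v y) = \<theta> y" "u y = \<theta> y" using assms(8) uK by (auto simp: Kset_def)
    then show "u y \<le> v y" by linarith
  qed
  have vpsi: "\<And>x. x \<in> W \<Longrightarrow> \<psi> x \<le> v x" using assms(8) by (auto simp: Kset_def)
  have upsi: "\<And>x. x \<in> W \<Longrightarrow> \<psi> x \<le> u x" using uK by (auto simp: Kset_def)
  have extW: "\<And>y. y \<in> ext_boundary b W \<Longrightarrow> y \<notin> W" by (auto simp: ext_boundary_def)
  have SWe: "\<And>y. y \<in> S \<Longrightarrow> y \<notin> W \<Longrightarrow> y \<in> ext_boundary b W" by (auto simp: S_def gclosure_def)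
  define M where "M = Max ((\<lambda>x. u x - v x) ` W)"
  have Wne: "W \<noteq> {}" using neg by auto
  have Mge: "\<And>y. y \<in> W \<Longrightarrow> u y - v y \<le> M" unfolding M_def using assms(4) by auto
  obtain x0 where x0: "x0 \<in> W" "u x0 - v x0 = M"
  proof -
    have "M \<in> (\<lambda>x. u x - v x) ` W" unfolding M_def using assms(4) Wne by (intro Max_in) auto
    then show ?thesis using that by force
  qed
  have Mpos: "M > 0" using neg Mge by force
  have le_M: "\<And>y. y \<in> S \<Longrightarrow> u y - v y \<le> M"
  proof -
    fix y assume "y \<in> S"
    then show "u y - v y \<le> M"
      using Mge SWe bd Mpos by (cases "y \<in> W") force+
  qed
  have propag: "\<And>z y. z \<in> W \<Longrightarrow> u z - v z = M \<Longrightarrow> b z y > 0 \<Longrightarrow> y \<in> W \<and> u y - v y = M"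
  proof -
    fix z y assume zW: "z \<in> W" and zM: "u z - v z = M" and bzy: "b z y > 0"
    define t where "t = M"
    have tpos: "t > 0" using Mpos t_def by simp
    define u' where "u' = u(z := v z)"
    have zS: "z \<in> S" using zW WS by auto
    have rowu: "(\<lambda>y. b z y * \<bar>u z - u y\<bar> powr (p-1)) summable_on UNIV"
      by (rule row_summable[where b=b and S=S and z=z and g=u and p=p, OF bnn nb0[OF zW] bsum zS uDp assms(3)])
    define R where "R = (\<lambda>y. b z y * sgnpow p (u z - u y))"
    define Rv where "Rv = (\<lambda>y. b z y * sgnpow p (v z - v y))"
    have Rsum: "R summable_on UNIV"
      by (rule sum_abs_real) (use rowu in \<open>simp add: R_def abs_mult abs_sgnpow bnn\<close>)
    have rowv: "(\<lambda>y. b z y * \<bar>v z - v y\<bar> powr (p-1)) summable_on UNIV"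
    proof (cases "Fp b p (gclosure b W) v")
      case True
      then show ?thesis using zS by (simp add: Fp_def S_def)
    next
      case False
      then have vDp: "Dp b p S v" using assms(6) by (simp add: S_def)
      show ?thesis by (rule row_summable[where b=b and S=S and z=z and g=v and p=p, OF bnn nb0[OF zW] bsum zS vDp assms(3)])
    qed
    have Rvsum: "Rv summable_on UNIV"
      by (rule sum_abs_real) (use rowv in \<open>simp add: Rv_def abs_mult abs_sgnpow bnn\<close>)
    have u'Dp: "Dp b p S u'"
    proof -
      define F where "F = (\<lambda>x y. 2 powr p * (b x y * \<bar>u x - u y\<bar> powr p) +
         2 powr p * (if x = z \<or> y = z then b x y * t powr p else 0))"
      define H where "H = (\<lambda>x y. if x = z \<or> y = z then b x y * t powr p else (0::real))"
      have Hs: "(\<lambda>(x,y). H x y) summable_on S \<times> S"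
      proof (rule rowcol(1)[OF zS])
        show "\<And>x y. x \<noteq> z \<Longrightarrow> y \<noteq> z \<Longrightarrow> H x y = 0" by (simp add: H_def)
        show "H z z = 0" by (simp add: H_def bdiag)
        have "(\<lambda>y. b z y * t powr p) summable_on S"
          by (rule summable_on_subset_banach[OF summable_on_cmult_left[OF bsum]]) simp
        then show "(\<lambda>y. H z y) summable_on S" by (simp add: H_def)
        then show "(\<lambda>x. H x z) summable_on S" by (simp add: H_def bsym)
      qed
      have Fs: "(\<lambda>(x,y). F x y) summable_on S \<times> S"
      proof -
        have a: "(\<lambda>q. 2 powr p * (\<lambda>(x,y). b x y * \<bar>u x - u y\<bar> powr p) q) summable_on S \<times> S"
          using summable_on_cmult_right[OF uDp[unfolded Dp_def], of "2 powr p"] .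
        have b: "(\<lambda>q. 2 powr p * (\<lambda>(x,y). H x y) q) summable_on S \<times> S"
          using summable_on_cmult_right[OF Hs, of "2 powr p"] .
        have eq: "(\<lambda>(x,y). F x y) = (\<lambda>q. 2 powr p * (\<lambda>(x,y). b x y * \<bar>u x - u y\<bar> powr p) q + 2 powr p * (\<lambda>(x,y). H x y) q)"
          by (auto simp: fun_eq_iff F_def H_def)
        show ?thesis unfolding eq using summable_on_add[OF a b] .
      qed
      show ?thesis unfolding Dp_def
      proof (rule summable_on_comparison_test[OF Fs])
        fix q assume "q \<in> S \<times> S"
        obtain x y where q: "q = (x,y)" by fastforce
        define cc where "cc = (if x = z \<or> y = z then t else 0)"
        have cc0: "cc \<ge> 0" using tpos by (simp add: cc_def)
        have d: "\<bar>u' x - u' y\<bar> \<le> \<bar>u x - u y\<bar> + cc"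
          using zM tpos unfolding u'_def cc_def t_def by auto
        have "b x y * \<bar>u' x - u' y\<bar> powr p \<le> 2 powr p * (b x y * \<bar>u x - u y\<bar> powr p) + 2 powr p * (b x y * cc powr p)"
          using assms(3) by (intro dp_bound[OF bnn d cc0]) auto
        also have "b x y * cc powr p = (if x = z \<or> y = z then b x y * t powr p else 0)"
          by (simp add: cc_def)
        finally show "(case q of (x, y) \<Rightarrow> b x y * \<bar>u' x - u' y\<bar> powr p) \<le> (case q of (x, y) \<Rightarrow> F x y)"
          by (simp add: q F_def)
        show "0 \<le> (case q of (x, y) \<Rightarrow> b x y * \<bar>u' x - u' y\<bar> powr p)" by (simp add: q bnn)
      qed
    qed
    have u'K: "u' \<in> Kset b p \<psi> \<theta> W"
      using u'Dp uK vpsi zW extW unfolding Kset_def S_def u'_def by auto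
    have en: "energy b p S u (\<lambda>x. u' x - u x) \<ge> 0" by (rule uvar[OF u'K])
    define H where "H = (\<lambda>x y. b x y * sgnpow p (u x - u y) * ((u' x - u x) - (u' y - u y)))"
    have Hrow: "\<And>y. H z y = - t * R y"
      by (auto simp: H_def R_def u'_def t_def zM[symmetric] bdiag)
    have Hcol: "\<And>x. H x z = - t * R x"
    proof -
      fix x
      have "sgnpow p (u x - u z) = - sgnpow p (u z - u x)"
        using sgnpow_neg[of p "u z - u x"] by simp
      then show "H x z = - t * R x"
        by (cases "x = z") (auto simp: H_def R_def u'_def t_def zM[symmetric] bdiag bsym algebra_simps)
    qed
    have RS: "R summable_on S" using summable_on_subset_banach[OF Rsum] by simp
    have HrS: "(\<lambda>y. H z y) summable_on S" unfolding Hrow using summable_on_cmult_right[OF RS] .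
    have HcS: "(\<lambda>x. H x z) summable_on S" unfolding Hcol using summable_on_cmult_right[OF RS] .
    have "energy b p S u (\<lambda>x. u' x - u x) = 1/2 * infsum (\<lambda>(x,y). H x y) (S \<times> S)"
      by (simp add: energy_def H_def)
    also have "\<dots> = 1/2 * (infsum (\<lambda>y. H z y) S + infsum (\<lambda>x. H x z) S)"
      by (subst rowcol(2)[OF zS _ _ HrS HcS]) (auto simp: H_def u'_def)
    also have "\<dots> = - t * infsum R S"
      unfolding Hrow Hcol by (simp add: infsum_uminus infsum_cmult_right[OF RS])
    finally have "- t * infsum R S \<ge> 0" using en by simp
    then have RS0: "infsum R S \<le> 0" using tpos by (simp add: mult_le_0_iff)
    have "infsum R UNIV = infsum R S"
      by (rule infsum_cong_neutral) (auto simp: R_def nb0[OF zW])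
    with RS0 have R0: "infsum R UNIV \<le> 0" by simp
    have "0 \<le> p_laplacian b m p v z" using assms(7) zW by blast
    then have "0 \<le> (1 / m z) * infsum Rv UNIV" by (simp add: p_laplacian_def Rv_def)
    then have Rv0: "infsum Rv UNIV \<ge> 0" using mpos[of z] by (simp add: zero_le_divide_iff)
    define D where "D = (\<lambda>y. R y + - Rv y)"
    have Dsum: "D summable_on UNIV" unfolding D_def
      by (rule summable_on_add[OF Rsum summable_on_uminus[THEN iffD2, OF Rvsum]])
    have "infsum D UNIV = infsum R UNIV - infsum Rv UNIV"
      unfolding D_def using infsum_add[OF Rsum summable_on_uminus[THEN iffD2, OF Rvsum]] infsum_uminus[of Rv] by simp
    then have D0: "infsum D UNIV \<le> 0" using R0 Rv0 by simp
    have Dnn: "\<And>y. D y \<ge> 0"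
    proof -
      fix y
      show "D y \<ge> 0"
      proof (cases "b z y > 0")
        case True
        then have "y \<in> S" by (rule nb[OF zW])
        then have "u y - v y \<le> M" by (rule le_M)
        then have "v z - v y \<le> u z - u y" using zM by simp
        then have "sgnpow p (v z - v y) \<le> sgnpow p (u z - u y)" by (rule sgnpow_le[OF assms(3)])
        then show ?thesis using bnn[of z y] by (simp add: D_def R_def Rv_def mult_left_mono)
      next
        case False
        then have "b z y = 0" using bnn[of z y] by simp
        then show ?thesis by (simp add: D_def R_def Rv_def)
      qed
    qed
    have "D y = 0" using nonneg_infsum_le_0D[OF D0 Dsum] Dnn by simp
    then have "sgnpow p (u z - u y) = sgnpow p (v z - v y)" using bzy
      by (simp add: D_def R_def Rv_def)
    then have eq: "u z - u y = v z - v y"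
      using sgnpow_less[OF assms(3), of "u z - u y" "v z - v y"] sgnpow_less[OF assms(3), of "v z - v y" "u z - u y"]
      by (cases "u z - u y < v z - v y") (auto simp: not_less order_le_less)
    then have yM: "u y - v y = M" using zM by simp
    have yS: "y \<in> S" by (rule nb[OF zW bzy])
    have "y \<in> W"
    proof (rule ccontr)
      assume "y \<notin> W"
      then have "y \<in> ext_boundary b W" using SWe yS by blast
      then have "u y \<le> v y" by (rule bd)
      then show False using yM Mpos by simp
    qed
    then show "y \<in> W \<and> u y - v y = M" using yM by simp
  qed
  have all: "\<And>y. y \<in> W \<and> u y - v y = M"
  proof -
    fix y
    from conn[of x0 y] show "y \<in> W \<and> u y - v y = M"
    proof (induction rule: rtranclp_induct)
      case base
      then show ?case using x0 by simp
    next
      case (step y' y'')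
      then show ?case using propag by blast
    qed
  qed
  then have "UNIV \<subseteq> W" by blast
  then have "finite (UNIV :: 'x set)" using assms(4) finite_subset by blast
  then show False using infX by simp
qed

end
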